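(* Let $(f,\bar f)\colon (G,P_G)\to(H,P_H)$ be a regular epimorphism in $\mathsf{PreOrdGrp}$ (i.e. both $f$ and $\bar f$ surjective). The following conditions are equivalent: (1) (a) $\mathsf{Ker}(f)\subseteq Z(G)$, and (b) $\bar f\colon P_G\to P_H$ is a special homogeneous surjection in the category $\mathsf{Mon}$ of monoids; (2) $(f,\bar f)$ is a $\Gamma$-normal extension; (3) $(f,\bar f)$ is a $\Gamma$-central extension.
   Context: A preordered group is a pair $(G,P_G)$ where $G$ is a group (written additively, not necessarily abelian) and $P_G\subseteq G$ is a submonoid closed under conjugation in $G$. A morphism $(f,\bar f)\colon (G,P_G)\to(H,P_H)$ is a group homomorphism $f$ with $f(P_G)\subseteq P_H$, $\bar f$ its restriction to positive cones; this gives the category $\mathsf{PreOrdGrp}$. Limits are computed componentwise; regular (= normal = effective descent) epimorphisms are the morphisms with $f$ and $\bar f$ both surjective. Let $\mathsf{Mono(Ab)}$ denote the full subcategory of preordered groups $(G,P_G)$ with $G$ abelian and $P_G$ a subgroup. The inclusion $U\colon\mathsf{Mono(Ab)}\to\mathsf{PreOrdGrp}$ has a left adjoint $F$ with $F(G,P_G)=(G/[G,G],\ \{x-y : x,y\in\eta_G(P_G)\})$, where $\eta_G\colon G\to G/[G,G]$ is the abelianization quotient (the second component is the group completion of the monoid $\eta_G(P_G)$), and unit component $(G,P_G)\to UF(G,P_G)$ given by $\eta_G$. The Galois structure $\Gamma$ uses as extensions the regular epimorphisms. A regular epimorphism $(f,\bar f)\colon X\to Y$ is a $\Gamma$-trivial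 extension if the square formed by $(f,\bar f)$, the unit components $X\to UF(X)$, $Y\to UF(Y)$ and $UF(f,\bar f)$ is a pullback in $\mathsf{PreOrdGrp}$; it is a $\Gamma$-central extension if there is a regular epimorphism $p\colon E\to Y$ such that the pullback of $(f,\bar f)$ along $p$ is a $\Gamma$-trivial extension; it is a $\Gamma$-normal extension if the first projection of its kernel pair is a $\Gamma$-trivial extension. A split epimorphism of monoids $f\colon X\to Y$ with section $s$ and kernel $K=f^{-1}(0)$ is homogeneous if for every $y\in Y$ the maps $K\to f^{-1}(y)$, $x\mapsto x+s(y)$ and $x\mapsto s(y)+x$, are bijections. A surjective monoid homomorphism $f\colon X\to Y$ is a special homogeneous surjection if the first projection $\pi_1\colon Eq(f)\to X$ of its kernel pair $Eq(f)=\{(x,x')\in X\times X : f(x)=f(x')\}$, with section the diagonal $x\mapsto(x,x)$, is a homogeneous split epimorphism. *)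

theory Defs
  imports "HOL-Algebra.Algebra"
begin

text \<open>Preordered groups: a group G (HOL-Algebra record, written multiplicatively)
  together with a positive cone P: a submonoid of G closed under conjugation.\<close>

definition preordered_group :: "'a monoid \<Rightarrow> 'a set \<Rightarrow> bool" where
  "preordered_group G P \<longleftrightarrow> group G \<and> submonoid P G \<and>
     (\<forall>g\<in>carrier G. \<forall>p\<in>P. g \<otimes>\<^bsub>G\<^esub> p \<otimes>\<^bsub>G\<^esub> inv\<^bsub>G\<^esub> g \<in> P)"

definition preord_morphism :: "'a monoid \<Rightarrow> 'a set \<Rightarrow> 'b monoid \<Rightarrow> 'b set \<Rightarrow> ('a \<Rightarrow> 'b) \<Rightarrow> bool" where
  "preord_morphism G P H Q f \<longleftrightarrow> f \<in> hom G H \<and> f ` P \<subseteq> Q"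

definition regular_epi :: "'a monoid \<Rightarrow> 'a set \<Rightarrow> 'b monoid \<Rightarrow> 'b set \<Rightarrow> ('a \<Rightarrow> 'b) \<Rightarrow> bool" where
  "regular_epi G P H Q f \<longleftrightarrow> preord_morphism G P H Q f \<and> f ` carrier G = carrier H \<and> f ` P = Q"

text \<open>A commutative square  X --f--> A, X --g--> B, A --h--> C, B --k--> C
  is a pullback in PreOrdGrp (limits computed componentwise): the comparison map
  into the componentwise pullback is bijective on groups and on positive cones.\<close>
definition is_pullback ::
  "'x monoid \<Rightarrow> 'x set \<Rightarrow> 'a monoid \<Rightarrow> 'a set \<Rightarrow> 'b monoid \<Rightarrow> 'b set \<Rightarrow>
   ('x \<Rightarrow> 'a) \<Rightarrow> ('x \<Rightarrow> 'b) \<Rightarrow> ('a \<Rightarrow> 'c) \<Rightarrow> ('b \<Rightarrow> 'c) \<Rightarrow> bool" where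
  "is_pullback XX PX A PA B PB f g hh kk \<longleftrightarrow>
     (\<forall>x\<in>carrier XX. hh (f x) = kk (g x)) \<and>
     bij_betw (\<lambda>x. (f x, g x)) (carrier XX) {(a, b). a \<in> carrier A \<and> b \<in> carrier B \<and> hh a = kk b} \<and>
     bij_betw (\<lambda>x. (f x, g x)) PX {(a, b). a \<in> PA \<and> b \<in> PB \<and> hh a = kk b}"

text \<open>Abelianization: G/[G,G], the unit eta_G, the positive cone of F(G,P)
  (group completion of eta_G(P)) and the induced map UF(f).\<close>

definition abelianization :: "'a monoid \<Rightarrow> 'a set monoid" where
  "abelianization G = G Mod (derived G (carrier G))"

definition ab_eta :: "'a monoid \<Rightarrow> 'a \<Rightarrow> 'a set" where
  "ab_eta G x = derived G (carrier G) #>\<^bsub>G\<^esub> x"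

definition ab_cone :: "'a monoid \<Rightarrow> 'a set \<Rightarrow> 'a set set" where
  "ab_cone G P = {x \<otimes>\<^bsub>abelianization G\<^esub> inv\<^bsub>abelianization G\<^esub> y | x y.
                    x \<in> ab_eta G ` P \<and> y \<in> ab_eta G ` P}"

definition ab_map :: "'a monoid \<Rightarrow> 'b monoid \<Rightarrow> ('a \<Rightarrow> 'b) \<Rightarrow> 'a set \<Rightarrow> 'b set" where
  "ab_map G H f C = ab_eta H (f (SOME x. x \<in> C))"

definition trivial_ext :: "'a monoid \<Rightarrow> 'a set \<Rightarrow> 'b monoid \<Rightarrow> 'b set \<Rightarrow> ('a \<Rightarrow> 'b) \<Rightarrow> bool" where
  "trivial_ext G P H Q f \<longleftrightarrow> regular_epi G P H Q f \<and>
     is_pullback G P H Q (abelianization G) (ab_cone G P)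
       f (ab_eta G) (ab_eta H) (ab_map G H f)"

definition pb_group :: "'e monoid \<Rightarrow> 'a monoid \<Rightarrow> ('e \<Rightarrow> 'b) \<Rightarrow> ('a \<Rightarrow> 'b) \<Rightarrow> ('e \<times> 'a) monoid" where
  "pb_group E G p f = (DirProd E G)\<lparr>carrier := {(e, x). e \<in> carrier E \<and> x \<in> carrier G \<and> p e = f x}\<rparr>"

definition pb_cone :: "'e set \<Rightarrow> 'a set \<Rightarrow> ('e \<Rightarrow> 'b) \<Rightarrow> ('a \<Rightarrow> 'b) \<Rightarrow> ('e \<times> 'a) set" where
  "pb_cone R P p f = {(e, x). e \<in> R \<and> x \<in> P \<and> p e = f x}"

text \<open>Gamma-central extension, with the witnessing object E ranging over
  preordered groups whose elements have type 'e (fixed via the TYPE argument).\<close>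
definition central_ext :: "'e itself \<Rightarrow> 'a monoid \<Rightarrow> 'a set \<Rightarrow> 'b monoid \<Rightarrow> 'b set \<Rightarrow> ('a \<Rightarrow> 'b) \<Rightarrow> bool" where
  "central_ext (_ :: 'e itself) G P H Q f \<longleftrightarrow> regular_epi G P H Q f \<and>
     (\<exists>(E :: 'e monoid) R p. preordered_group E R \<and> regular_epi E R H Q p \<and>
        trivial_ext (pb_group E G p f) (pb_cone R P p f) E R fst)"

definition normal_ext :: "'a monoid \<Rightarrow> 'a set \<Rightarrow> 'b monoid \<Rightarrow> 'b set \<Rightarrow> ('a \<Rightarrow> 'b) \<Rightarrow> bool" where
  "normal_ext G P H Q f \<longleftrightarrow> regular_epi G P H Q f \<and>
     trivial_ext (pb_group G G f f) (pb_cone P P f f) G P fst"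

definition homogeneous_split_epi :: "('x, 'm) monoid_scheme \<Rightarrow> ('y, 'n) monoid_scheme \<Rightarrow> ('x \<Rightarrow> 'y) \<Rightarrow> ('y \<Rightarrow> 'x) \<Rightarrow> bool" where
  "homogeneous_split_epi MM NN f s \<longleftrightarrow>
     f \<in> hom MM NN \<and> s \<in> hom NN MM \<and> (\<forall>y\<in>carrier NN. f (s y) = y) \<and>
     (\<forall>y\<in>carrier NN.
        bij_betw (\<lambda>k. k \<otimes>\<^bsub>MM\<^esub> s y) {k\<in>carrier MM. f k = \<one>\<^bsub>NN\<^esub>} {x\<in>carrier MM. f x = y} \<and>
        bij_betw (\<lambda>k. s y \<otimes>\<^bsub>MM\<^esub> k) {k\<in>carrier MM. f k = \<one>\<^bsub>NN\<^esub>} {x\<in>carrier MM. f x = y})"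

definition kernel_pair_monoid :: "('x, 'm) monoid_scheme \<Rightarrow> ('x \<Rightarrow> 'y) \<Rightarrow> ('x \<times> 'x) monoid" where
  "kernel_pair_monoid MM f = (DirProd MM MM)\<lparr>carrier := {(x, x'). x \<in> carrier MM \<and> x' \<in> carrier MM \<and> f x = f x'}\<rparr>"

definition special_homogeneous_surj :: "('x, 'm) monoid_scheme \<Rightarrow> ('y, 'n) monoid_scheme \<Rightarrow> ('x \<Rightarrow> 'y) \<Rightarrow> bool" where
  "special_homogeneous_surj MM NN f \<longleftrightarrow> f \<in> hom MM NN \<and> f ` carrier MM = carrier NN \<and>
     homogeneous_split_epi (kernel_pair_monoid MM f) MM fst (\<lambda>x. (x, x))"

definition group_center :: "'a monoid \<Rightarrow> 'a set" where
  "group_center G = {z \<in> carrier G. \<forall>g\<in>carrier G. z \<otimes>\<^bsub>G\<^esub> g = g \<otimes>\<^bsub>G\<^esub> z}"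

end

theory Submission
  imports Defs
begin


lemma pb_carrier [simp]:
  "carrier (pb_group E G p f) = {(e, x). e \<in> carrier E \<and> x \<in> carrier G \<and> p e = f x}"
  by (simp add: pb_group_def)

lemma pb_mult [simp]:
  "(a, b) \<otimes>\<^bsub>pb_group E G p f\<^esub> (c, d) = (a \<otimes>\<^bsub>E\<^esub> c, b \<otimes>\<^bsub>G\<^esub> d)"
  by (simp add: pb_group_def)

lemma pb_one [simp]: "\<one>\<^bsub>pb_group E G p f\<^esub> = (\<one>\<^bsub>E\<^esub>, \<one>\<^bsub>G\<^esub>)"
  by (simp add: pb_group_def)

lemma pb_subgroup:
  assumes "group E" "group G" "group H" "p \<in> hom E H" "f \<in> hom G H"
  shows "subgroup {(e, x). e \<in> carrier E \<and> x \<in> carrier G \<and> p e = f x} (E \<times>\<times> G)"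
proof -
  interpret E: group E by fact
  interpret G: group G by fact
  interpret H: group H by fact
  interpret p: group_hom E H p using assms by (simp add: group_hom_def group_hom_axioms_def)
  interpret f: group_hom G H f using assms by (simp add: group_hom_def group_hom_axioms_def)
  show ?thesis
  proof (rule subgroup.intro)
    show "{(e, x). e \<in> carrier E \<and> x \<in> carrier G \<and> p e = f x} \<subseteq> carrier (E \<times>\<times> G)"
      by auto
  next
    fix a b assume "a \<in> {(e, x). e \<in> carrier E \<and> x \<in> carrier G \<and> p e = f x}"
      "b \<in> {(e, x). e \<in> carrier E \<and> x \<in> carrier G \<and> p e = f x}"
    then show "a \<otimes>\<^bsub>E \<times>\<times> G\<^esub> b \<in> {(e, x). e \<in> carrier E \<and> x \<in> carrier G \<and> p e = f x}"
      by (cases a, cases b) simp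
  next
    show "\<one>\<^bsub>E \<times>\<times> G\<^esub> \<in> {(e, x). e \<in> carrier E \<and> x \<in> carrier G \<and> p e = f x}"
      by simp
  next
    fix a assume "a \<in> {(e, x). e \<in> carrier E \<and> x \<in> carrier G \<and> p e = f x}"
    then show "inv\<^bsub>E \<times>\<times> G\<^esub> a \<in> {(e, x). e \<in> carrier E \<and> x \<in> carrier G \<and> p e = f x}"
      by (cases a) (simp add: inv_DirProd assms(1,2))
  qed
qed

lemma pb_group_is_group:
  assumes "group E" "group G" "group H" "p \<in> hom E H" "f \<in> hom G H"
  shows "group (pb_group E G p f)"
proof -
  have "group (E \<times>\<times> G)" using assms DirProd_group by blast
  then show ?thesis unfolding pb_group_def
    using pb_subgroup[OF assms] subgroup.subgroup_is_group by blast
qed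

lemma pb_inv [simp]:
  assumes "group E" "group G" "group H" "p \<in> hom E H" "f \<in> hom G H"
    and "(a, b) \<in> carrier (pb_group E G p f)"
  shows "inv\<^bsub>pb_group E G p f\<^esub> (a, b) = (inv\<^bsub>E\<^esub> a, inv\<^bsub>G\<^esub> b)"
proof -
  have g: "group (E \<times>\<times> G)" using assms DirProd_group by blast
  have "inv\<^bsub>pb_group E G p f\<^esub> (a, b) = inv\<^bsub>E \<times>\<times> G\<^esub> (a, b)"
    unfolding pb_group_def
    using group.m_inv_consistent[OF g pb_subgroup[OF assms(1-5)]] assms(6) by simp
  also have "\<dots> = (inv\<^bsub>E\<^esub> a, inv\<^bsub>G\<^esub> b)" using assms by (simp add: inv_DirProd)
  finally show ?thesis .
qed


lemma ab_normal: "group M \<Longrightarrow> normal (derived M (carrier M)) M"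
  by (rule group.derived_self_is_normal)

lemma ab_group: "group M \<Longrightarrow> group (abelianization M)"
  unfolding abelianization_def by (rule normal.factorgroup_is_group[OF ab_normal])

lemma ab_eta_carrier:
  "group M \<Longrightarrow> x \<in> carrier M \<Longrightarrow> ab_eta M x \<in> carrier (abelianization M)"
  unfolding abelianization_def ab_eta_def carrier_FactGroup by blast

lemma ab_carrier_E:
  "C \<in> carrier (abelianization M) \<Longrightarrow> \<exists>x\<in>carrier M. C = ab_eta M x"
  unfolding abelianization_def ab_eta_def carrier_FactGroup by blast

lemma ab_eta_eq:
  assumes "group M" "x \<in> carrier M" "y \<in> carrier M"
  shows "ab_eta M x = ab_eta M y \<longleftrightarrow> x \<otimes>\<^bsub>M\<^esub> inv\<^bsub>M\<^esub> y \<in> derived M (carrier M)"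
proof -
  interpret M: group M by fact
  have sg: "subgroup (derived M (carrier M)) M" by (simp add: M.derived_is_subgroup)
  show ?thesis unfolding ab_eta_def
    using M.repr_independence[OF _ assms(3) sg] M.repr_independenceD[OF sg assms(2)]
      subgroup.rcos_module[OF sg assms(1) assms(3) assms(2)]
    by metis
qed

lemma ab_eta_mult:
  assumes "group M" "x \<in> carrier M" "y \<in> carrier M"
  shows "ab_eta M x \<otimes>\<^bsub>abelianization M\<^esub> ab_eta M y = ab_eta M (x \<otimes>\<^bsub>M\<^esub> y)"
  unfolding abelianization_def ab_eta_def
  using normal.rcos_sum[OF ab_normal[OF assms(1)] assms(2,3)] by simp

lemma ab_eta_hom: "group M \<Longrightarrow> ab_eta M \<in> hom M (abelianization M)"
  unfolding abelianization_def ab_eta_def[abs_def]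
  by (rule normal.r_coset_hom_Mod[OF ab_normal])

lemma ab_eta_inv:
  assumes "group M" "x \<in> carrier M"
  shows "inv\<^bsub>abelianization M\<^esub> (ab_eta M x) = ab_eta M (inv\<^bsub>M\<^esub> x)"
proof -
  interpret gh: group_hom M "abelianization M" "ab_eta M"
    using assms(1) ab_group[OF assms(1)] ab_eta_hom[OF assms(1)]
    by (simp add: group_hom_def group_hom_axioms_def)
  show ?thesis using gh.hom_inv[OF assms(2)] by simp
qed

lemma ab_eta_one: "group M \<Longrightarrow> ab_eta M \<one>\<^bsub>M\<^esub> = \<one>\<^bsub>abelianization M\<^esub>"
  unfolding abelianization_def ab_eta_def
  by (simp add: group.coset_mult_one group.derived_in_carrier)

lemma derived_hom_img:
  assumes "group M" "group Y" "\<phi> \<in> hom M Y" "d \<in> derived M (carrier M)"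
  shows "\<phi> d \<in> derived Y (carrier Y)"
proof -
  interpret gh: group_hom M Y \<phi>
    using assms by (simp add: group_hom_def group_hom_axioms_def)
  have "\<phi> d \<in> derived Y (\<phi> ` carrier M)" using gh.derived_img[of "carrier M"] assms(4) by auto
  moreover have "derived Y (\<phi> ` carrier M) \<subseteq> derived Y (carrier Y)"
    by (rule gh.H.mono_derived) (auto)
  ultimately show ?thesis by blast
qed

lemma ab_map_eta:
  assumes "group M" "group Y" "\<phi> \<in> hom M Y" "x \<in> carrier M"
  shows "ab_map M Y \<phi> (ab_eta M x) = ab_eta Y (\<phi> x)"
proof -
  interpret M: group M by fact
  interpret Y: group Y by fact
  interpret gh: group_hom M Y \<phi>
    using assms by (simp add: group_hom_def group_hom_axioms_def)
  have sg: "subgroup (derived M (carrier M)) M" by (simp add: M.derived_is_subgroup)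
  have "x \<in> ab_eta M x" unfolding ab_eta_def by (rule M.rcos_self[OF assms(4) sg])
  then have ex: "\<exists>w. w \<in> ab_eta M x" by blast
  define w where "w = (SOME w. w \<in> ab_eta M x)"
  have w: "w \<in> derived M (carrier M) #>\<^bsub>M\<^esub> x"
    unfolding w_def using someI_ex[OF ex] by (simp add: ab_eta_def)
  have wc: "w \<in> carrier M"
    by (rule subgroup.elemrcos_carrier[OF sg assms(1) assms(4) w])
  have "w \<otimes>\<^bsub>M\<^esub> inv\<^bsub>M\<^esub> x \<in> derived M (carrier M)"
    by (rule subgroup.rcos_module_imp[OF sg assms(1) assms(4) w])
  then have "\<phi> (w \<otimes>\<^bsub>M\<^esub> inv\<^bsub>M\<^esub> x) \<in> derived Y (carrier Y)"
    by (rule derived_hom_img[OF assms(1-3)])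
  moreover have "\<phi> (w \<otimes>\<^bsub>M\<^esub> inv\<^bsub>M\<^esub> x) = \<phi> w \<otimes>\<^bsub>Y\<^esub> inv\<^bsub>Y\<^esub> \<phi> x"
    using wc assms(4) gh.hom_mult gh.hom_inv by simp
  ultimately have "\<phi> w \<otimes>\<^bsub>Y\<^esub> inv\<^bsub>Y\<^esub> \<phi> x \<in> derived Y (carrier Y)" by simp
  then have "ab_eta Y (\<phi> w) = ab_eta Y (\<phi> x)"
    using ab_eta_eq[OF assms(2) gh.hom_closed[OF wc] gh.hom_closed[OF assms(4)]] by simp
  then show ?thesis unfolding ab_map_def w_def[symmetric] .
qed



lemma (in group) cancel_r_assoc [simp]:
  "x \<in> carrier G \<Longrightarrow> y \<in> carrier G \<Longrightarrow> x \<otimes> (inv x \<otimes> y) = y"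
  by (simp add: m_assoc[symmetric])

lemma (in group) cancel_l_assoc [simp]:
  "x \<in> carrier G \<Longrightarrow> y \<in> carrier G \<Longrightarrow> inv x \<otimes> (x \<otimes> y) = y"
  by (simp add: m_assoc[symmetric])

lemma (in group) comm_of_commutator_one:
  assumes "a \<in> carrier G" "b \<in> carrier G" "a \<otimes> b \<otimes> inv a \<otimes> inv b = \<one>"
  shows "a \<otimes> b = b \<otimes> a"
proof -
  have "a \<otimes> b \<otimes> inv a \<otimes> inv b \<otimes> b \<otimes> a = a \<otimes> b"
    using assms(1,2) by (simp add: m_assoc)
  then show ?thesis using assms by simp
qed

lemma (in group) commutator_central_left:
  assumes "x \<in> carrier G" "y \<in> carrier G" "k \<in> carrier G" "\<forall>g\<in>carrier G. k \<otimes> g = g \<otimes> k"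
  shows "(x \<otimes> k) \<otimes> y \<otimes> inv (x \<otimes> k) \<otimes> inv y = x \<otimes> y \<otimes> inv x \<otimes> inv y"
proof -
  have ky: "k \<otimes> y = y \<otimes> k" using assms by blast
  have "(x \<otimes> k) \<otimes> y \<otimes> inv (x \<otimes> k) \<otimes> inv y = x \<otimes> (k \<otimes> y) \<otimes> (inv k \<otimes> inv x) \<otimes> inv y"
    using assms(1-3) by (simp add: m_assoc inv_mult_group)
  also have "\<dots> = x \<otimes> y \<otimes> (k \<otimes> inv k) \<otimes> inv x \<otimes> inv y"
    using assms(1-3) by (simp add: ky m_assoc)
  also have "\<dots> = x \<otimes> y \<otimes> inv x \<otimes> inv y" using assms(1-3) by simp
  finally show ?thesis .
qed

lemma (in group) commutator_central_right:
  assumes "x \<in> carrier G" "y \<in> carrier G" "k \<in> carrier G" "\<forall>g\<in>carrier G. k \<otimes> g = g \<otimes> k"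
  shows "x \<otimes> (y \<otimes> k) \<otimes> inv x \<otimes> inv (y \<otimes> k) = x \<otimes> y \<otimes> inv x \<otimes> inv y"
proof -
  have kx: "k \<otimes> inv x = inv x \<otimes> k" using assms by blast
  have "x \<otimes> (y \<otimes> k) \<otimes> inv x \<otimes> inv (y \<otimes> k) = x \<otimes> y \<otimes> (k \<otimes> inv x) \<otimes> (inv k \<otimes> inv y)"
    using assms(1-3) by (simp add: m_assoc inv_mult_group)
  also have "\<dots> = x \<otimes> y \<otimes> inv x \<otimes> (k \<otimes> inv k) \<otimes> inv y"
    using assms(1-3) by (simp add: kx m_assoc)
  also have "\<dots> = x \<otimes> y \<otimes> inv x \<otimes> inv y" using assms(1-3) by simp
  finally show ?thesis .
qed

lemma trivial_ext_inj:
  assumes "group M" "trivial_ext M PM B PB \<pi>" "x \<in> carrier M" "y \<in> carrier M" "\<pi> x = \<pi> y"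
    "x \<otimes>\<^bsub>M\<^esub> inv\<^bsub>M\<^esub> y \<in> derived M (carrier M)"
  shows "x = y"
proof -
  have e: "ab_eta M x = ab_eta M y" using ab_eta_eq[OF assms(1,3,4)] assms(6) by simp
  have "inj_on (\<lambda>x. (\<pi> x, ab_eta M x)) (carrier M)"
    using assms(2) unfolding trivial_ext_def is_pullback_def bij_betw_def by blast
  then show ?thesis using assms(3-5) e unfolding inj_on_def by blast
qed

lemma trivial_ext_cone:
  assumes "trivial_ext M PM B PB \<pi>" "b \<in> PB" "c \<in> ab_cone M PM" "ab_eta B b = ab_map M B \<pi> c"
  shows "\<exists>x\<in>PM. \<pi> x = b \<and> ab_eta M x = c"
proof -
  have "(\<lambda>x. (\<pi> x, ab_eta M x)) ` PM = {(a, b). a \<in> PB \<and> b \<in> ab_cone M PM \<and> ab_eta B a = ab_map M B \<pi> b}"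
    using assms(1) unfolding trivial_ext_def is_pullback_def bij_betw_def by blast
  then have "(b, c) \<in> (\<lambda>x. (\<pi> x, ab_eta M x)) ` PM" using assms(2-4) by simp
  then show ?thesis by force
qed

lemma fst_pb_hom: "fst \<in> hom (pb_group E G p f) E"
  by (auto simp: hom_def)



lemma preord_D:
  assumes "preordered_group G P"
  shows "group G" "submonoid P G" "P \<subseteq> carrier G" "\<one>\<^bsub>G\<^esub> \<in> P"
    "\<And>x y. x \<in> P \<Longrightarrow> y \<in> P \<Longrightarrow> x \<otimes>\<^bsub>G\<^esub> y \<in> P"
    "\<And>g x. g \<in> carrier G \<Longrightarrow> x \<in> P \<Longrightarrow> g \<otimes>\<^bsub>G\<^esub> x \<otimes>\<^bsub>G\<^esub> inv\<^bsub>G\<^esub> g \<in> P"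
  using assms unfolding preordered_group_def
  by (auto simp: submonoid_def)

lemma regular_epi_D:
  assumes "regular_epi G P H Q f"
  shows "f \<in> hom G H" "f ` P \<subseteq> Q" "f ` carrier G = carrier H" "f ` P = Q"
  using assms unfolding regular_epi_def preord_morphism_def by auto

lemma central_to_1:
  assumes pG: "preordered_group G P" and pH: "preordered_group H Q"
    and rf: "regular_epi G P H Q f"
    and pE: "preordered_group E R" and rp: "regular_epi E R H Q p"
    and tr: "trivial_ext (pb_group E G p f) (pb_cone R P p f) E R fst"
  shows "kernel G H f \<subseteq> group_center G"
    and "\<forall>x\<in>P. \<forall>y\<in>P. f x = f y \<longrightarrow> inv\<^bsub>G\<^esub> y \<otimes>\<^bsub>G\<^esub> x \<in> P"
proof -
  note G = preord_D[OF pG] and H = preord_D[OF pH] and EE = preord_D[OF pE]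
  note fD = regular_epi_D[OF rf] and pD = regular_epi_D[OF rp]
  interpret G: group G by (rule G(1))
  interpret H: group H by (rule H(1))
  interpret E: group E by (rule EE(1))
  interpret f: group_hom G H f using fD(1) by (simp add: group_hom_def group_hom_axioms_def G(1) H(1))
  interpret p: group_hom E H p using pD(1) by (simp add: group_hom_def group_hom_axioms_def EE(1) H(1))
  let ?M = "pb_group E G p f"
  have gM: "group ?M" by (rule pb_group_is_group[OF EE(1) G(1) H(1) pD(1) fD(1)])
  interpret M: group ?M by (rule gM)
  have minv: "inv\<^bsub>?M\<^esub> (a, b) = (inv\<^bsub>E\<^esub> a, inv\<^bsub>G\<^esub> b)" if "(a, b) \<in> carrier ?M" for a b
    by (rule pb_inv[OF EE(1) G(1) H(1) pD(1) fD(1) that])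
  show "kernel G H f \<subseteq> group_center G"
  proof
    fix k assume "k \<in> kernel G H f"
    then have k: "k \<in> carrier G" "f k = \<one>\<^bsub>H\<^esub>" by (auto simp: kernel_def)
    have "\<forall>g\<in>carrier G. k \<otimes>\<^bsub>G\<^esub> g = g \<otimes>\<^bsub>G\<^esub> k"
    proof
      fix g assume g: "g \<in> carrier G"
      have "f g \<in> p ` carrier E" using g pD(3) by simp
      then obtain e where e: "e \<in> carrier E" "p e = f g" by (metis imageE)
      have u: "(\<one>\<^bsub>E\<^esub>, k) \<in> carrier ?M" using k by simp
      have v: "(e, g) \<in> carrier ?M" using e g by simp
      define c where "c = (\<one>\<^bsub>E\<^esub>, k) \<otimes>\<^bsub>?M\<^esub> (e, g) \<otimes>\<^bsub>?M\<^esub> inv\<^bsub>?M\<^esub> (\<one>\<^bsub>E\<^esub>, k) \<otimes>\<^bsub>?M\<^esub> inv\<^bsub>?M\<^esub> (e, g)"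
      have "c \<in> derived_set ?M (carrier ?M)" unfolding c_def
        by (rule UN_I[OF u], rule UN_I[OF v], simp)
      then have cd: "c \<in> derived ?M (carrier ?M)" unfolding derived_def by (rule generate.incl)
      have cval: "c = (\<one>\<^bsub>E\<^esub>, k \<otimes>\<^bsub>G\<^esub> g \<otimes>\<^bsub>G\<^esub> inv\<^bsub>G\<^esub> k \<otimes>\<^bsub>G\<^esub> inv\<^bsub>G\<^esub> g)"
        unfolding c_def using u v e g k by (simp add: minv)
      have cc: "c \<in> carrier ?M" using cd M.derived_in_carrier by blast
      have "c \<otimes>\<^bsub>?M\<^esub> inv\<^bsub>?M\<^esub> \<one>\<^bsub>?M\<^esub> \<in> derived ?M (carrier ?M)"
        using cd M.r_one[OF cc] M.inv_one by (simp only:)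
      moreover have "fst c = fst \<one>\<^bsub>?M\<^esub>" using cval by simp
      ultimately have "c = \<one>\<^bsub>?M\<^esub>"
        using trivial_ext_inj[OF gM tr cc M.one_closed] by blast
      then have "k \<otimes>\<^bsub>G\<^esub> g \<otimes>\<^bsub>G\<^esub> inv\<^bsub>G\<^esub> k \<otimes>\<^bsub>G\<^esub> inv\<^bsub>G\<^esub> g = \<one>\<^bsub>G\<^esub>"
        using cval by simp
      then show "k \<otimes>\<^bsub>G\<^esub> g = g \<otimes>\<^bsub>G\<^esub> k" using G.comm_of_commutator_one k g by blast
    qed
    then show "k \<in> group_center G" using k by (simp add: group_center_def)
  qed
  show "\<forall>x\<in>P. \<forall>y\<in>P. f x = f y \<longrightarrow> inv\<^bsub>G\<^esub> y \<otimes>\<^bsub>G\<^esub> x \<in> P"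
  proof (intro ballI impI)
    fix x y assume x: "x \<in> P" and y: "y \<in> P" and fxy: "f x = f y"
    have xc: "x \<in> carrier G" and yc: "y \<in> carrier G" using x y G(3) by auto
    have "f y \<in> p ` R" using fD(4) pD(4) y by blast
    then obtain r0 where r0: "r0 \<in> R" "p r0 = f y" by (metis imageE)
    have r0c: "r0 \<in> carrier E" using r0 EE(3) by blast
    have u: "(r0, x) \<in> pb_cone R P p f" using r0 x fxy by (simp add: pb_cone_def)
    have v: "(r0, y) \<in> pb_cone R P p f" using r0 y by (simp add: pb_cone_def)
    have uc: "(r0, x) \<in> carrier ?M" using r0c xc r0 fxy by simp
    have vc: "(r0, y) \<in> carrier ?M" using r0c yc r0 by simp
    define c where "c = ab_eta ?M (r0, x) \<otimes>\<^bsub>abelianization ?M\<^esub> inv\<^bsub>abelianization ?M\<^esub> ab_eta ?M (r0, y)"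
    have ccone: "c \<in> ab_cone ?M (pb_cone R P p f)"
      unfolding c_def ab_cone_def using u v by blast
    define w where "w = (\<one>\<^bsub>E\<^esub>, x \<otimes>\<^bsub>G\<^esub> inv\<^bsub>G\<^esub> y)"
    have wc: "w \<in> carrier ?M" unfolding w_def using xc yc fxy by simp
    have "c = ab_eta ?M ((r0, x) \<otimes>\<^bsub>?M\<^esub> inv\<^bsub>?M\<^esub> (r0, y))"
      unfolding c_def using ab_eta_inv[OF gM vc] ab_eta_mult[OF gM uc M.inv_closed[OF vc]] by simp
    also have "(r0, x) \<otimes>\<^bsub>?M\<^esub> inv\<^bsub>?M\<^esub> (r0, y) = w"
      unfolding w_def using minv[OF vc] r0c by simp
    finally have cw: "c = ab_eta ?M w" .
    have "ab_map ?M E fst c = ab_eta E \<one>\<^bsub>E\<^esub>"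
      unfolding cw using ab_map_eta[OF gM EE(1) fst_pb_hom wc] by (simp add: w_def)
    then obtain z where z: "z \<in> pb_cone R P p f" "fst z = \<one>\<^bsub>E\<^esub>" "ab_eta ?M z = c"
      using trivial_ext_cone[OF tr EE(4) ccone] by metis
    have zc: "z \<in> carrier ?M" using z(1) EE(3) G(3) by (auto simp: pb_cone_def)
    have "z \<otimes>\<^bsub>?M\<^esub> inv\<^bsub>?M\<^esub> w \<in> derived ?M (carrier ?M)"
      using ab_eta_eq[OF gM zc wc] z(3) cw by simp
    moreover have "fst z = fst w" using z(2) by (simp add: w_def)
    ultimately have "z = w" using trivial_ext_inj[OF gM tr zc wc] by blast
    then have xy: "x \<otimes>\<^bsub>G\<^esub> inv\<^bsub>G\<^esub> y \<in> P" using z(1) by (auto simp: pb_cone_def w_def)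
    have "inv\<^bsub>G\<^esub> y \<otimes>\<^bsub>G\<^esub> (x \<otimes>\<^bsub>G\<^esub> inv\<^bsub>G\<^esub> y) \<otimes>\<^bsub>G\<^esub> inv\<^bsub>G\<^esub> (inv\<^bsub>G\<^esub> y) \<in> P"
      using G(6)[OF G.inv_closed[OF yc] xy] .
    moreover have "inv\<^bsub>G\<^esub> y \<otimes>\<^bsub>G\<^esub> (x \<otimes>\<^bsub>G\<^esub> inv\<^bsub>G\<^esub> y) \<otimes>\<^bsub>G\<^esub> inv\<^bsub>G\<^esub> (inv\<^bsub>G\<^esub> y) = inv\<^bsub>G\<^esub> y \<otimes>\<^bsub>G\<^esub> x"
      using xc yc by (simp add: G.m_assoc)
    ultimately show "inv\<^bsub>G\<^esub> y \<otimes>\<^bsub>G\<^esub> x \<in> P" by simp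
  qed
qed



lemma kp_carrier [simp]:
  "carrier (kernel_pair_monoid (G\<lparr>carrier := P\<rparr>) f) = {(x, x'). x \<in> P \<and> x' \<in> P \<and> f x = f x'}"
  by (simp add: kernel_pair_monoid_def)

lemma kp_mult [simp]:
  "(a, b) \<otimes>\<^bsub>kernel_pair_monoid (G\<lparr>carrier := P\<rparr>) f\<^esub> (c, d) = (a \<otimes>\<^bsub>G\<^esub> c, b \<otimes>\<^bsub>G\<^esub> d)"
  by (simp add: kernel_pair_monoid_def)

lemma shs_iff:
  assumes pG: "preordered_group G P" and pH: "preordered_group H Q"
    and rf: "regular_epi G P H Q f"
  shows "special_homogeneous_surj (G\<lparr>carrier := P\<rparr>) (H\<lparr>carrier := Q\<rparr>) f \<longleftrightarrow>
         (\<forall>x\<in>P. \<forall>y\<in>P. f x = f y \<longrightarrow> inv\<^bsub>G\<^esub> y \<otimes>\<^bsub>G\<^esub> x \<in> P)"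
proof -
  note G = preord_D[OF pG] and H = preord_D[OF pH]
  note fD = regular_epi_D[OF rf]
  interpret G: group G by (rule G(1))
  interpret H: group H by (rule H(1))
  interpret f: group_hom G H f using fD(1) by (simp add: group_hom_def group_hom_axioms_def G(1) H(1))
  let ?PG = "G\<lparr>carrier := P\<rparr>"
  let ?KP = "kernel_pair_monoid ?PG f"
  let ?K = "{k \<in> carrier ?KP. fst k = \<one>\<^bsub>?PG\<^esub>}"
  have Pc: "\<And>x. x \<in> P \<Longrightarrow> x \<in> carrier G" using G(3) by blast
  show ?thesis
  proof
    assume S: "special_homogeneous_surj ?PG (H\<lparr>carrier := Q\<rparr>) f"
    show "\<forall>x\<in>P. \<forall>y\<in>P. f x = f y \<longrightarrow> inv\<^bsub>G\<^esub> y \<otimes>\<^bsub>G\<^esub> x \<in> P"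
    proof (intro ballI impI)
      fix x y assume x: "x \<in> P" and y: "y \<in> P" and fxy: "f x = f y"
      have "bij_betw (\<lambda>k. (y, y) \<otimes>\<^bsub>?KP\<^esub> k) ?K {z \<in> carrier ?KP. fst z = y}"
        using S y unfolding special_homogeneous_surj_def homogeneous_split_epi_def by simp
      then have "(\<lambda>k. (y, y) \<otimes>\<^bsub>?KP\<^esub> k) ` ?K = {z \<in> carrier ?KP. fst z = y}"
        by (simp add: bij_betw_def)
      moreover have "(y, x) \<in> {z \<in> carrier ?KP. fst z = y}" using x y fxy by simp
      ultimately obtain k where k: "k \<in> ?K" "(y, y) \<otimes>\<^bsub>?KP\<^esub> k = (y, x)"
        by (metis (no_types, lifting) imageE)
      obtain k1 k2 where kk: "k = (k1, k2)" by (cases k)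
      have k2: "k2 \<in> P" "y \<otimes>\<^bsub>G\<^esub> k2 = x" using k kk by auto
      have "k2 = inv\<^bsub>G\<^esub> y \<otimes>\<^bsub>G\<^esub> x"
        using k2 Pc[OF y] Pc[OF x] by (metis G.cancel_l_assoc Pc)
      then show "inv\<^bsub>G\<^esub> y \<otimes>\<^bsub>G\<^esub> x \<in> P" using k2 by simp
    qed
  next
    assume C: "\<forall>x\<in>P. \<forall>y\<in>P. f x = f y \<longrightarrow> inv\<^bsub>G\<^esub> y \<otimes>\<^bsub>G\<^esub> x \<in> P"
    have C': "x \<otimes>\<^bsub>G\<^esub> inv\<^bsub>G\<^esub> y \<in> P" if "x \<in> P" "y \<in> P" "f x = f y" for x y
    proof -
      have "y \<otimes>\<^bsub>G\<^esub> (inv\<^bsub>G\<^esub> y \<otimes>\<^bsub>G\<^esub> x) \<otimes>\<^bsub>G\<^esub> inv\<^bsub>G\<^esub> y \<in> P"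
        using G(6)[OF Pc[OF that(2)]] C that by blast
      moreover have "y \<otimes>\<^bsub>G\<^esub> (inv\<^bsub>G\<^esub> y \<otimes>\<^bsub>G\<^esub> x) \<otimes>\<^bsub>G\<^esub> inv\<^bsub>G\<^esub> y = x \<otimes>\<^bsub>G\<^esub> inv\<^bsub>G\<^esub> y"
        using Pc that by simp
      ultimately show ?thesis by simp
    qed
    have hom1: "f \<in> hom ?PG (H\<lparr>carrier := Q\<rparr>)"
      using fD(2) Pc by (auto simp: hom_def)
    have hom2: "fst \<in> hom ?KP ?PG" by (auto simp: hom_def kernel_pair_monoid_def)
    have hom3: "(\<lambda>x. (x, x)) \<in> hom ?PG ?KP" by (auto simp: hom_def)
    have right: "bij_betw (\<lambda>k. k \<otimes>\<^bsub>?KP\<^esub> (y, y)) ?K {z \<in> carrier ?KP. fst z = y}"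
      if y: "y \<in> P" for y
    proof (rule bij_betw_imageI)
      show "inj_on (\<lambda>k. k \<otimes>\<^bsub>?KP\<^esub> (y, y)) ?K"
      proof (rule inj_onI)
        fix a b assume a: "a \<in> ?K" and b: "b \<in> ?K" and e: "a \<otimes>\<^bsub>?KP\<^esub> (y, y) = b \<otimes>\<^bsub>?KP\<^esub> (y, y)"
        obtain a1 a2 where aa: "a = (a1, a2)" by (cases a)
        obtain b1 b2 where bb: "b = (b1, b2)" by (cases b)
        have "a2 \<otimes>\<^bsub>G\<^esub> y = b2 \<otimes>\<^bsub>G\<^esub> y" using e aa bb by simp
        moreover have "a2 \<in> carrier G" "b2 \<in> carrier G" using a b aa bb Pc by auto
        ultimately have "a2 = b2" using Pc[OF y] by simp
        then show "a = b" using a b aa bb by simp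
      qed
      show "(\<lambda>k. k \<otimes>\<^bsub>?KP\<^esub> (y, y)) ` ?K = {z \<in> carrier ?KP. fst z = y}"
      proof (intro equalityI subsetI)
        fix z assume "z \<in> (\<lambda>k. k \<otimes>\<^bsub>?KP\<^esub> (y, y)) ` ?K"
        then obtain a where a: "a \<in> ?K" "z = a \<otimes>\<^bsub>?KP\<^esub> (y, y)" by blast
        obtain a1 a2 where aa: "a = (a1, a2)" by (cases a)
        have a2: "a2 \<in> P" "a1 = \<one>\<^bsub>G\<^esub>" "f \<one>\<^bsub>G\<^esub> = f a2" using a aa by auto
        have "f (a2 \<otimes>\<^bsub>G\<^esub> y) = f y" using a2 Pc[OF a2(1)] Pc[OF y] by simp
        then show "z \<in> {z \<in> carrier ?KP. fst z = y}"
          using a aa a2 G(5)[OF a2(1) y] Pc[OF y] y by simp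
      next
        fix z assume z: "z \<in> {z \<in> carrier ?KP. fst z = y}"
        obtain z1 z2 where zz: "z = (z1, z2)" by (cases z)
        have zs: "z1 = y" "z2 \<in> P" "f y = f z2" using z zz by auto
        have "z2 \<otimes>\<^bsub>G\<^esub> inv\<^bsub>G\<^esub> y \<in> P" using C' zs y by simp
        moreover have "f \<one>\<^bsub>G\<^esub> = f (z2 \<otimes>\<^bsub>G\<^esub> inv\<^bsub>G\<^esub> y)" using zs Pc[OF y] Pc[OF zs(2)] by simp
        moreover have "(\<one>\<^bsub>G\<^esub>, z2 \<otimes>\<^bsub>G\<^esub> inv\<^bsub>G\<^esub> y) \<otimes>\<^bsub>?KP\<^esub> (y, y) = z"
          using zs zz Pc[OF y] Pc[OF zs(2)] by (simp add: G.m_assoc)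
        ultimately show "z \<in> (\<lambda>k. k \<otimes>\<^bsub>?KP\<^esub> (y, y)) ` ?K"
          using G(4) by (auto intro!: image_eqI[where x = "(\<one>\<^bsub>G\<^esub>, z2 \<otimes>\<^bsub>G\<^esub> inv\<^bsub>G\<^esub> y)"])
      qed
    qed
    have left: "bij_betw (\<lambda>k. (y, y) \<otimes>\<^bsub>?KP\<^esub> k) ?K {z \<in> carrier ?KP. fst z = y}"
      if y: "y \<in> P" for y
    proof (rule bij_betw_imageI)
      show "inj_on (\<lambda>k. (y, y) \<otimes>\<^bsub>?KP\<^esub> k) ?K"
      proof (rule inj_onI)
        fix a b assume a: "a \<in> ?K" and b: "b \<in> ?K" and e: "(y, y) \<otimes>\<^bsub>?KP\<^esub> a = (y, y) \<otimes>\<^bsub>?KP\<^esub> b"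
        obtain a1 a2 where aa: "a = (a1, a2)" by (cases a)
        obtain b1 b2 where bb: "b = (b1, b2)" by (cases b)
        have "y \<otimes>\<^bsub>G\<^esub> a2 = y \<otimes>\<^bsub>G\<^esub> b2" using e aa bb by simp
        moreover have "a2 \<in> carrier G" "b2 \<in> carrier G" using a b aa bb Pc by auto
        ultimately have "a2 = b2" using Pc[OF y] by simp
        then show "a = b" using a b aa bb by simp
      qed
      show "(\<lambda>k. (y, y) \<otimes>\<^bsub>?KP\<^esub> k) ` ?K = {z \<in> carrier ?KP. fst z = y}"
      proof (intro equalityI subsetI)
        fix z assume "z \<in> (\<lambda>k. (y, y) \<otimes>\<^bsub>?KP\<^esub> k) ` ?K"
        then obtain a where a: "a \<in> ?K" "z = (y, y) \<otimes>\<^bsub>?KP\<^esub> a" by blast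
        obtain a1 a2 where aa: "a = (a1, a2)" by (cases a)
        have a2: "a2 \<in> P" "a1 = \<one>\<^bsub>G\<^esub>" "f \<one>\<^bsub>G\<^esub> = f a2" using a aa by auto
        have "f (y \<otimes>\<^bsub>G\<^esub> a2) = f y" using a2 Pc[OF a2(1)] Pc[OF y] by simp
        then show "z \<in> {z \<in> carrier ?KP. fst z = y}"
          using a aa a2 G(5)[OF y a2(1)] Pc[OF y] y by simp
      next
        fix z assume z: "z \<in> {z \<in> carrier ?KP. fst z = y}"
        obtain z1 z2 where zz: "z = (z1, z2)" by (cases z)
        have zs: "z1 = y" "z2 \<in> P" "f y = f z2" using z zz by auto
        have "inv\<^bsub>G\<^esub> y \<otimes>\<^bsub>G\<^esub> z2 \<in> P" using C zs y by simp
        moreover have "f \<one>\<^bsub>G\<^esub> = f (inv\<^bsub>G\<^esub> y \<otimes>\<^bsub>G\<^esub> z2)" using zs Pc[OF y] Pc[OF zs(2)] by simp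
        moreover have "(y, y) \<otimes>\<^bsub>?KP\<^esub> (\<one>\<^bsub>G\<^esub>, inv\<^bsub>G\<^esub> y \<otimes>\<^bsub>G\<^esub> z2) = z"
          using zs zz Pc[OF y] Pc[OF zs(2)] by simp
        ultimately show "z \<in> (\<lambda>k. (y, y) \<otimes>\<^bsub>?KP\<^esub> k) ` ?K"
          using G(4) by (auto intro!: image_eqI[where x = "(\<one>\<^bsub>G\<^esub>, inv\<^bsub>G\<^esub> y \<otimes>\<^bsub>G\<^esub> z2)"])
      qed
    qed
    show "special_homogeneous_surj ?PG (H\<lparr>carrier := Q\<rparr>) f"
      unfolding special_homogeneous_surj_def homogeneous_split_epi_def
      using hom1 hom2 hom3 fD(4) left right by simp
  qed
qed



lemma one_to_normal:
  assumes pG: "preordered_group G P" and pH: "preordered_group H Q"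
    and rf: "regular_epi G P H Q f"
    and Kc: "kernel G H f \<subseteq> group_center G"
    and C: "\<forall>x\<in>P. \<forall>y\<in>P. f x = f y \<longrightarrow> inv\<^bsub>G\<^esub> y \<otimes>\<^bsub>G\<^esub> x \<in> P"
  shows "normal_ext G P H Q f"
proof -
  note G = preord_D[OF pG] and H = preord_D[OF pH]
  note fD = regular_epi_D[OF rf]
  interpret G: group G by (rule G(1))
  interpret H: group H by (rule H(1))
  interpret f: group_hom G H f using fD(1) by (simp add: group_hom_def group_hom_axioms_def G(1) H(1))
  let ?M = "pb_group G G f f"
  let ?PM = "pb_cone P P f f"
  let ?N = "derived ?M (carrier ?M)"
  let ?NG = "derived G (carrier G)"
  let ?A = "abelianization ?M"
  have Pc: "\<And>x. x \<in> P \<Longrightarrow> x \<in> carrier G" using G(3) by blast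
  have gM: "group ?M" by (rule pb_group_is_group[OF G(1) G(1) H(1) fD(1) fD(1)])
  interpret M: group ?M by (rule gM)
  have gA: "group ?A" by (rule ab_group[OF gM])
  interpret A: group ?A by (rule gA)
  have minv: "inv\<^bsub>?M\<^esub> (a, b) = (inv\<^bsub>G\<^esub> a, inv\<^bsub>G\<^esub> b)" if "(a, b) \<in> carrier ?M" for a b
    by (rule pb_inv[OF G(1) G(1) H(1) fD(1) fD(1) that])
  have central: "\<forall>g\<in>carrier G. k \<otimes>\<^bsub>G\<^esub> g = g \<otimes>\<^bsub>G\<^esub> k"
    if "k \<in> carrier G" "f k = \<one>\<^bsub>H\<^esub>" for k
  proof -
    have "k \<in> kernel G H f" using that by (simp add: kernel_def)
    then have "k \<in> group_center G" using Kc by blast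
    then show ?thesis by (simp add: group_center_def)
  qed
  define D where "D = (\<lambda>u. (u, u)) ` carrier G"
  have subD: "subgroup D ?M"
  proof (rule subgroup.intro)
    show "D \<subseteq> carrier ?M" by (auto simp: D_def)
  next
    fix a b assume "a \<in> D" "b \<in> D"
    then show "a \<otimes>\<^bsub>?M\<^esub> b \<in> D" by (auto simp: D_def)
  next
    show "\<one>\<^bsub>?M\<^esub> \<in> D" by (auto simp: D_def)
  next
    fix a assume "a \<in> D"
    then obtain u where u: "u \<in> carrier G" "a = (u, u)" by (auto simp: D_def)
    then have "inv\<^bsub>?M\<^esub> a = (inv\<^bsub>G\<^esub> u, inv\<^bsub>G\<^esub> u)" using minv by simp
    then show "inv\<^bsub>?M\<^esub> a \<in> D" using u by (auto simp: D_def)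
  qed
  have dset: "derived_set ?M (carrier ?M) \<subseteq> D"
  proof
    fix z assume "z \<in> derived_set ?M (carrier ?M)"
    then obtain h1 h2 where h: "h1 \<in> carrier ?M" "h2 \<in> carrier ?M"
      "z = h1 \<otimes>\<^bsub>?M\<^esub> h2 \<otimes>\<^bsub>?M\<^esub> inv\<^bsub>?M\<^esub> h1 \<otimes>\<^bsub>?M\<^esub> inv\<^bsub>?M\<^esub> h2" by blast
    obtain a b where ab: "h1 = (a, b)" by (cases h1)
    obtain c d where cd: "h2 = (c, d)" by (cases h2)
    have abc: "a \<in> carrier G" "b \<in> carrier G" "f a = f b" using h(1) ab by auto
    have cdc: "c \<in> carrier G" "d \<in> carrier G" "f c = f d" using h(2) cd by auto
    define k1 where "k1 = inv\<^bsub>G\<^esub> a \<otimes>\<^bsub>G\<^esub> b"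
    define k2 where "k2 = inv\<^bsub>G\<^esub> c \<otimes>\<^bsub>G\<^esub> d"
    have k1c: "k1 \<in> carrier G" "f k1 = \<one>\<^bsub>H\<^esub>" using abc by (simp_all add: k1_def)
    have k2c: "k2 \<in> carrier G" "f k2 = \<one>\<^bsub>H\<^esub>" using cdc by (simp_all add: k2_def)
    have b: "b = a \<otimes>\<^bsub>G\<^esub> k1" using abc by (simp add: k1_def G.m_assoc[symmetric])
    have d: "d = c \<otimes>\<^bsub>G\<^esub> k2" using cdc by (simp add: k2_def G.m_assoc[symmetric])
    have "b \<otimes>\<^bsub>G\<^esub> d \<otimes>\<^bsub>G\<^esub> inv\<^bsub>G\<^esub> b \<otimes>\<^bsub>G\<^esub> inv\<^bsub>G\<^esub> d
        = a \<otimes>\<^bsub>G\<^esub> (c \<otimes>\<^bsub>G\<^esub> k2) \<otimes>\<^bsub>G\<^esub> inv\<^bsub>G\<^esub> a \<otimes>\<^bsub>G\<^esub> inv\<^bsub>G\<^esub> (c \<otimes>\<^bsub>G\<^esub> k2)"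
      unfolding b d
      by (rule G.commutator_central_left[OF abc(1) _ k1c(1) central[OF k1c]]) (simp add: cdc k2c)
    also have "\<dots> = a \<otimes>\<^bsub>G\<^esub> c \<otimes>\<^bsub>G\<^esub> inv\<^bsub>G\<^esub> a \<otimes>\<^bsub>G\<^esub> inv\<^bsub>G\<^esub> c"
      by (rule G.commutator_central_right[OF abc(1) cdc(1) k2c(1) central[OF k2c]])
    finally have e: "b \<otimes>\<^bsub>G\<^esub> d \<otimes>\<^bsub>G\<^esub> inv\<^bsub>G\<^esub> b \<otimes>\<^bsub>G\<^esub> inv\<^bsub>G\<^esub> d = a \<otimes>\<^bsub>G\<^esub> c \<otimes>\<^bsub>G\<^esub> inv\<^bsub>G\<^esub> a \<otimes>\<^bsub>G\<^esub> inv\<^bsub>G\<^esub> c" .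
    have "z = (a \<otimes>\<^bsub>G\<^esub> c \<otimes>\<^bsub>G\<^esub> inv\<^bsub>G\<^esub> a \<otimes>\<^bsub>G\<^esub> inv\<^bsub>G\<^esub> c, b \<otimes>\<^bsub>G\<^esub> d \<otimes>\<^bsub>G\<^esub> inv\<^bsub>G\<^esub> b \<otimes>\<^bsub>G\<^esub> inv\<^bsub>G\<^esub> d)"
      using h(3) ab cd minv h(1,2) by simp
    then show "z \<in> D" unfolding D_def using e abc cdc by auto
  qed
  have ND: "?N \<subseteq> D"
    unfolding derived_def by (rule M.generate_subgroup_incl[OF dset subD])
  have diag_hom: "(\<lambda>u. (u, u)) \<in> hom G ?M" by (auto simp: hom_def)
  have NGN: "(d, d) \<in> ?N" if "d \<in> ?NG" for d
    using derived_hom_img[OF G(1) gM diag_hom that] by simp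
  have NGc: "d \<in> carrier G" if "d \<in> ?NG" for d
    using G.derived_in_carrier[of "carrier G"] that by blast
  have fsth: "fst \<in> hom ?M G" by (rule fst_pb_hom)
  have comm: "ab_eta G (fst x) = ab_map ?M G fst (ab_eta ?M x)" if "x \<in> carrier ?M" for x
    using ab_map_eta[OF gM G(1) fsth that] by simp
  have lift: "\<exists>w d. d \<in> carrier G \<and> w \<in> carrier ?M \<and> fst w = g \<and> ab_eta ?M w = ab_eta ?M m \<and>
                  fst w = d \<otimes>\<^bsub>G\<^esub> fst m \<and> snd w = d \<otimes>\<^bsub>G\<^esub> snd m"
    if m: "m \<in> carrier ?M" and g: "g \<in> carrier G" and e: "ab_eta G g = ab_eta G (fst m)" for m g
  proof -
    obtain m1 m2 where mm: "m = (m1, m2)" by (cases m)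
    have mc: "m1 \<in> carrier G" "m2 \<in> carrier G" "f m1 = f m2" using m mm by auto
    define d where "d = g \<otimes>\<^bsub>G\<^esub> inv\<^bsub>G\<^esub> m1"
    have dN: "d \<in> ?NG" unfolding d_def using ab_eta_eq[OF G(1) g mc(1)] e mm by simp
    have ddN: "(d, d) \<in> ?N" by (rule NGN[OF dN])
    have ddc: "(d, d) \<in> carrier ?M" using ddN M.derived_in_carrier[of "carrier ?M"] by blast
    define w where "w = (d, d) \<otimes>\<^bsub>?M\<^esub> m"
    have wc: "w \<in> carrier ?M" unfolding w_def using ddc m by (rule M.m_closed)
    have fw: "fst w = g" unfolding w_def d_def using mm mc g by (simp add: G.m_assoc)
    have "w \<otimes>\<^bsub>?M\<^esub> inv\<^bsub>?M\<^esub> m = (d, d)"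
      unfolding w_def
      by (simp only: M.m_assoc[OF ddc m M.inv_closed[OF m]] M.r_inv[OF m] M.r_one[OF ddc])
    then have "ab_eta ?M w = ab_eta ?M m" using ab_eta_eq[OF gM wc m] ddN by simp
    moreover have "fst w = d \<otimes>\<^bsub>G\<^esub> fst m" "snd w = d \<otimes>\<^bsub>G\<^esub> snd m"
      unfolding w_def using mm by simp_all
    ultimately show ?thesis using wc fw NGc[OF dN] by blast
  qed
  have inj: "inj_on (\<lambda>x. (fst x, ab_eta ?M x)) (carrier ?M)"
  proof (rule inj_onI)
    fix x y assume x: "x \<in> carrier ?M" and y: "y \<in> carrier ?M"
      and e: "(fst x, ab_eta ?M x) = (fst y, ab_eta ?M y)"
    have "x \<otimes>\<^bsub>?M\<^esub> inv\<^bsub>?M\<^esub> y \<in> ?N" using e ab_eta_eq[OF gM x y] by simp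
    then have inD: "x \<otimes>\<^bsub>?M\<^esub> inv\<^bsub>?M\<^esub> y \<in> D" using ND by blast
    obtain a b where ab: "x = (a, b)" by (cases x)
    obtain a' b' where ab': "y = (a', b')" by (cases y)
    have c: "a \<in> carrier G" "b \<in> carrier G" "a' \<in> carrier G" "b' \<in> carrier G" "a = a'"
      using x y ab ab' e by auto
    have "x \<otimes>\<^bsub>?M\<^esub> inv\<^bsub>?M\<^esub> y = (a \<otimes>\<^bsub>G\<^esub> inv\<^bsub>G\<^esub> a', b \<otimes>\<^bsub>G\<^esub> inv\<^bsub>G\<^esub> b')"
      using ab ab' minv y by simp
    then have "a \<otimes>\<^bsub>G\<^esub> inv\<^bsub>G\<^esub> a' = b \<otimes>\<^bsub>G\<^esub> inv\<^bsub>G\<^esub> b'" using inD by (auto simp: D_def)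
    then have "b \<otimes>\<^bsub>G\<^esub> inv\<^bsub>G\<^esub> b' = \<one>\<^bsub>G\<^esub>" using c by simp
    then have "b = b'" using c by (metis G.inv_equality G.inv_inv G.inv_closed G.r_inv G.m_closed G.inv_solve_right G.l_one)
    then show "x = y" using ab ab' c by simp
  qed
  have bij1: "bij_betw (\<lambda>x. (fst x, ab_eta ?M x)) (carrier ?M)
      {(a, b). a \<in> carrier G \<and> b \<in> carrier ?A \<and> ab_eta G a = ab_map ?M G fst b}"
  proof (rule bij_betw_imageI[OF inj], intro equalityI subsetI)
    fix z assume "z \<in> (\<lambda>x. (fst x, ab_eta ?M x)) ` carrier ?M"
    then obtain x where x: "x \<in> carrier ?M" "z = (fst x, ab_eta ?M x)" by blast
    then show "z \<in> {(a, b). a \<in> carrier G \<and> b \<in> carrier ?A \<and> ab_eta G a = ab_map ?M G fst b}"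
      using comm[OF x(1)] ab_eta_carrier[OF gM x(1)] by auto
  next
    fix z assume "z \<in> {(a, b). a \<in> carrier G \<and> b \<in> carrier ?A \<and> ab_eta G a = ab_map ?M G fst b}"
    then obtain g c where z: "z = (g, c)" "g \<in> carrier G" "c \<in> carrier ?A" "ab_eta G g = ab_map ?M G fst c"
      by blast
    obtain m where m: "m \<in> carrier ?M" "c = ab_eta ?M m" using ab_carrier_E[OF z(3)] by blast
    have "ab_eta G g = ab_eta G (fst m)" using z(4) m comm by simp
    then obtain w where "w \<in> carrier ?M" "fst w = g" "ab_eta ?M w = c"
      using lift[OF m(1) z(2)] m(2) by blast
    then show "z \<in> (\<lambda>x. (fst x, ab_eta ?M x)) ` carrier ?M" using z(1) by force
  qed
  have PMc: "?PM \<subseteq> carrier ?M" using G(3) by (auto simp: pb_cone_def)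
  have oneP: "\<one>\<^bsub>?M\<^esub> \<in> ?PM" using G(4) by (simp add: pb_cone_def)
  have bij2: "bij_betw (\<lambda>x. (fst x, ab_eta ?M x)) ?PM
      {(a, b). a \<in> P \<and> b \<in> ab_cone ?M ?PM \<and> ab_eta G a = ab_map ?M G fst b}"
  proof (rule bij_betw_imageI[OF inj_on_subset[OF inj PMc]], intro equalityI subsetI)
    fix z assume "z \<in> (\<lambda>x. (fst x, ab_eta ?M x)) ` ?PM"
    then obtain x where x: "x \<in> ?PM" "z = (fst x, ab_eta ?M x)" by blast
    have xc: "x \<in> carrier ?M" using x(1) PMc by blast
    have "ab_eta ?M x = ab_eta ?M x \<otimes>\<^bsub>?A\<^esub> inv\<^bsub>?A\<^esub> ab_eta ?M \<one>\<^bsub>?M\<^esub>"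
      using ab_eta_one[OF gM] ab_eta_carrier[OF gM xc] by simp
    then have "ab_eta ?M x \<in> ab_cone ?M ?PM" unfolding ab_cone_def using x(1) oneP by blast
    moreover have "fst x \<in> P" using x(1) by (auto simp: pb_cone_def)
    ultimately show "z \<in> {(a, b). a \<in> P \<and> b \<in> ab_cone ?M ?PM \<and> ab_eta G a = ab_map ?M G fst b}"
      using comm[OF xc] x(2) by auto
  next
    fix z assume "z \<in> {(a, b). a \<in> P \<and> b \<in> ab_cone ?M ?PM \<and> ab_eta G a = ab_map ?M G fst b}"
    then obtain p0 c where z: "z = (p0, c)" "p0 \<in> P" "c \<in> ab_cone ?M ?PM" "ab_eta G p0 = ab_map ?M G fst c"
      by blast
    obtain u v where uv: "u \<in> ?PM" "v \<in> ?PM"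
      "c = ab_eta ?M u \<otimes>\<^bsub>?A\<^esub> inv\<^bsub>?A\<^esub> ab_eta ?M v"
      using z(3) unfolding ab_cone_def by blast
    obtain x1 x1' where u: "u = (x1, x1')" by (cases u)
    obtain y1 y1' where v: "v = (y1, y1')" by (cases v)
    have uP: "x1 \<in> P" "x1' \<in> P" "f x1 = f x1'" using uv(1) u by (auto simp: pb_cone_def)
    have vP: "y1 \<in> P" "y1' \<in> P" "f y1 = f y1'" using uv(2) v by (auto simp: pb_cone_def)
    have uc: "u \<in> carrier ?M" and vc: "v \<in> carrier ?M" using uv PMc by auto
    define m where "m = u \<otimes>\<^bsub>?M\<^esub> inv\<^bsub>?M\<^esub> v"
    have mc: "m \<in> carrier ?M" unfolding m_def by (rule M.m_closed[OF uc M.inv_closed[OF vc]])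
    have cm: "c = ab_eta ?M m"
      unfolding m_def uv(3) using ab_eta_inv[OF gM vc] ab_eta_mult[OF gM uc M.inv_closed[OF vc]] by simp
    have mval: "m = (x1 \<otimes>\<^bsub>G\<^esub> inv\<^bsub>G\<^esub> y1, x1' \<otimes>\<^bsub>G\<^esub> inv\<^bsub>G\<^esub> y1')"
      unfolding m_def using u v minv vc by simp
    have "ab_eta G p0 = ab_eta G (fst m)" using z(4) cm comm[OF mc] by simp
    then obtain w d where dc: "d \<in> carrier G" and w: "w \<in> carrier ?M" "fst w = p0" "ab_eta ?M w = ab_eta ?M m"
      "fst w = d \<otimes>\<^bsub>G\<^esub> fst m" "snd w = d \<otimes>\<^bsub>G\<^esub> snd m"
      using lift[OF mc Pc[OF z(2)]] by blast
    have xc: "x1 \<in> carrier G" "x1' \<in> carrier G" "y1 \<in> carrier G" "y1' \<in> carrier G"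
      using uP vP Pc by auto
    define k1 where "k1 = inv\<^bsub>G\<^esub> x1 \<otimes>\<^bsub>G\<^esub> x1'"
    define k2 where "k2 = inv\<^bsub>G\<^esub> y1' \<otimes>\<^bsub>G\<^esub> y1"
    have k1P: "k1 \<in> P" unfolding k1_def using C uP by simp
    have k2P: "k2 \<in> P" unfolding k2_def using C vP by simp
    define zz where "zz = k1 \<otimes>\<^bsub>G\<^esub> k2"
    have zzP: "zz \<in> P" unfolding zz_def using G(5) k1P k2P by blast
    have zzc: "zz \<in> carrier G" "f zz = \<one>\<^bsub>H\<^esub>"
      using xc uP vP by (simp_all add: zz_def k1_def k2_def)
    have cen: "inv\<^bsub>G\<^esub> y1 \<otimes>\<^bsub>G\<^esub> zz = zz \<otimes>\<^bsub>G\<^esub> inv\<^bsub>G\<^esub> y1"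
      using central[OF zzc] xc by simp
    have "x1 \<otimes>\<^bsub>G\<^esub> inv\<^bsub>G\<^esub> y1 \<otimes>\<^bsub>G\<^esub> zz = x1 \<otimes>\<^bsub>G\<^esub> (zz \<otimes>\<^bsub>G\<^esub> inv\<^bsub>G\<^esub> y1)"
      using xc zzc by (simp add: G.m_assoc cen)
    also have "\<dots> = x1' \<otimes>\<^bsub>G\<^esub> inv\<^bsub>G\<^esub> y1'"
      using xc by (simp add: zz_def k1_def k2_def G.m_assoc)
    finally have key: "x1' \<otimes>\<^bsub>G\<^esub> inv\<^bsub>G\<^esub> y1' = x1 \<otimes>\<^bsub>G\<^esub> inv\<^bsub>G\<^esub> y1 \<otimes>\<^bsub>G\<^esub> zz" by simp
    have "snd w = d \<otimes>\<^bsub>G\<^esub> (x1 \<otimes>\<^bsub>G\<^esub> inv\<^bsub>G\<^esub> y1) \<otimes>\<^bsub>G\<^esub> zz"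
      using w(5) mval key dc xc zzc by (simp add: G.m_assoc)
    also have "\<dots> = p0 \<otimes>\<^bsub>G\<^esub> zz" using w(2) w(4) mval by simp
    finally have "snd w \<in> P" using G(5)[OF z(2) zzP] by simp
    then have "w \<in> ?PM" using w(1) w(2) z(2) by (auto simp: pb_cone_def)
    moreover have "ab_eta ?M w = c" using w(3) cm by simp
    ultimately show "z \<in> (\<lambda>x. (fst x, ab_eta ?M x)) ` ?PM" using z(1) w(2) by force
  qed
  have re: "regular_epi ?M ?PM G P fst"
    unfolding regular_epi_def preord_morphism_def
  proof (intro conjI)
    show "fst \<in> hom ?M G" by (rule fsth)
    show "fst ` ?PM \<subseteq> P" by (auto simp: pb_cone_def)
    show "fst ` carrier ?M = carrier G"
    proof (intro equalityI subsetI)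
      fix g assume "g \<in> carrier G" then show "g \<in> fst ` carrier ?M" by (force intro: image_eqI[where x = "(g, g)"])
    qed auto
    show "fst ` ?PM = P"
    proof (intro equalityI subsetI)
      fix g assume "g \<in> P" then show "g \<in> fst ` ?PM"
        by (force simp: pb_cone_def intro: image_eqI[where x = "(g, g)"])
    qed (auto simp: pb_cone_def)
  qed
  show ?thesis
    unfolding normal_ext_def trivial_ext_def is_pullback_def
    using rf re comm bij1 bij2 by blast
qed

theorem theorem6p3:
  fixes G :: "'a monoid" and P :: "'a set" and H :: "'b monoid" and Q :: "'b set"
    and f :: "'a \<Rightarrow> 'b"
  assumes "preordered_group G P" and "preordered_group H Q"
    and "regular_epi G P H Q f"
  shows "((kernel G H f \<subseteq> group_center G \<and>
           special_homogeneous_surj (G\<lparr>carrier := P\<rparr>) (H\<lparr>carrier := Q\<rparr>) f)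
          \<longleftrightarrow> normal_ext G P H Q f)
       \<and> (normal_ext G P H Q f \<longrightarrow> central_ext TYPE('a) G P H Q f)
       \<and> (central_ext TYPE('e) G P H Q f \<longrightarrow>
           (kernel G H f \<subseteq> group_center G \<and>
            special_homogeneous_surj (G\<lparr>carrier := P\<rparr>) (H\<lparr>carrier := Q\<rparr>) f))"
proof -
  let ?one = "kernel G H f \<subseteq> group_center G \<and>
          special_homogeneous_surj (G\<lparr>carrier := P\<rparr>) (H\<lparr>carrier := Q\<rparr>) f"
  have a: "?one \<Longrightarrow> normal_ext G P H Q f"
    using one_to_normal[OF assms] shs_iff[OF assms] by blast
  have b: "?one" if "normal_ext G P H Q f"
  proof -
    have tr: "trivial_ext (pb_group G G f f) (pb_cone P P f f) G P fst"
      using that by (simp add: normal_ext_def)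
    show ?thesis
      using central_to_1[OF assms assms(1) assms(3) tr] shs_iff[OF assms] by blast
  qed
  have c: "central_ext TYPE('a) G P H Q f" if "normal_ext G P H Q f"
  proof -
    have tr: "trivial_ext (pb_group G G f f) (pb_cone P P f f) G P fst"
      using that by (simp add: normal_ext_def)
    show ?thesis
      unfolding central_ext_def using assms tr by blast
  qed
  have d: "?one" if ce: "central_ext TYPE('e) G P H Q f"
  proof -
    obtain E :: "'e monoid" and R p where
      E: "preordered_group E R" "regular_epi E R H Q p"
        "trivial_ext (pb_group E G p f) (pb_cone R P p f) E R fst"
      using ce unfolding central_ext_def by blast
    show ?thesis
      using central_to_1[OF assms E] shs_iff[OF assms] by blast
  qed
  show ?thesis using a b c d by blast
qed

end
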